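(* Let $d\in\{2,3\}$, $r>\frac{d+1}{2}$, $\beta>0$, and $\mathbf u,\mathbf v,\mathbf w\in H_{\mathbb C}$ with $\|A^{1/4}\mathbf u\|_\beta,\|A^{1/4}\mathbf v\|_\beta,\|A^{1/4}\mathbf w\|_\beta<\infty$. Then $$|\langle B(\mathbf u,\mathbf v),A^{r}e^{2\beta A^{1/2}}\mathbf w\rangle|\le C\,2^rC_W(r)\Big(\|\mathbf v\|_\beta\|A^{1/4}\mathbf u\|_\beta\|A^{1/4}\mathbf w\|_\beta+\|\mathbf u\|_\beta\|A^{1/4}\mathbf v\|_\beta\|A^{1/4}\mathbf w\|_\beta\Big),$$ with $C>0$ depending only on $d$.
   Context: Periodic domain $\Omega=[0,2\pi]^d$, $H$ = real mean-zero divergence-free $L^2$ vector fields, $H_{\mathbb C}=H+iH$ with sesquilinear $L^2$ inner product. $A=-\Delta$ acts by multiplication by $|\mathbf k|^2$ on Fourier coefficients. $\|\mathbf f\|_\beta=\|A^{r/2}e^{\beta A^{1/2}}\mathbf f\|$. $B(\mathbf u,\mathbf v)=\mathbb P(\mathbf u\cdot\nabla\mathbf v)$, $\mathbb P$ the Leray–Helmholtz projection, extended complex-bilinearly. $C_W(r)=\frac{1}{\pi 2^{d-1}}\frac{2r-d}{2r-1-d}$. *)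

theory Defs
  imports "HOL-Analysis.Analysis"
begin

text \<open>Fields on the torus [0,2pi]^d are represented by their Fourier coefficients:
  f(x) = sum over k in Z^d of (f k) e^{i k.x}, with f k a vector in C^d.
  The dimension d is CARD('d).\<close>

type_synonym ('d) cfield = "int ^ 'd \<Rightarrow> complex ^ 'd"

definition knorm2 :: "int ^ ('d::finite) \<Rightarrow> real" where
  "knorm2 k = (\<Sum>i\<in>UNIV. (real_of_int (k $ i))\<^sup>2)"

definition kmag :: "int ^ ('d::finite) \<Rightarrow> real" where
  "kmag k = sqrt (knorm2 k)"

definition vnorm2 :: "complex ^ ('d::finite) \<Rightarrow> real" where
  "vnorm2 a = (\<Sum>i\<in>UNIV. (cmod (a $ i))\<^sup>2)"

text \<open>Membership in H_C: mean zero, divergence free, square integrable.\<close>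
definition in_HC :: "('d::finite) cfield \<Rightarrow> bool" where
  "in_HC u \<longleftrightarrow> u 0 = 0
     \<and> (\<forall>k. (\<Sum>i\<in>UNIV. of_int (k $ i) * (u k $ i)) = 0)
     \<and> (\<lambda>k. vnorm2 (u k)) summable_on UNIV"

text \<open>L2 inner product and norm on [0,2pi]^d (Parseval).\<close>
definition inner_L2 :: "('d::finite) cfield \<Rightarrow> ('d::finite) cfield \<Rightarrow> complex" where
  "inner_L2 f g = of_real ((2 * pi) ^ CARD('d)) *
      (\<Sum>\<^sub>\<infinity>k. \<Sum>i\<in>UNIV. f k $ i * cnj (g k $ i))"

definition L2norm :: "('d::finite) cfield \<Rightarrow> real" where
  "L2norm f = sqrt ((2 * pi) ^ CARD('d) * (\<Sum>\<^sub>\<infinity>k. vnorm2 (f k)))"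

text \<open>A^s (A = -Laplacian, multiplier |k|^2) and e^{beta A^{1/2}} (multiplier e^{beta |k|}).\<close>
definition Apow :: "real \<Rightarrow> ('d::finite) cfield \<Rightarrow> ('d::finite) cfield" where
  "Apow s f = (\<lambda>k. (knorm2 k powr s) *\<^sub>R f k)"

definition expA :: "real \<Rightarrow> ('d::finite) cfield \<Rightarrow> ('d::finite) cfield" where
  "expA b f = (\<lambda>k. exp (b * kmag k) *\<^sub>R f k)"

definition gev_norm :: "real \<Rightarrow> real \<Rightarrow> ('d::finite) cfield \<Rightarrow> real" where
  "gev_norm r b f = L2norm (Apow (r / 2) (expA b f))"

definition gev_finite :: "real \<Rightarrow> real \<Rightarrow> ('d::finite) cfield \<Rightarrow> bool" where
  "gev_finite r b f \<longleftrightarrow> (\<lambda>k. vnorm2 (Apow (r / 2) (expA b f) k)) summable_on UNIV"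

text \<open>Fourier coefficients of u . grad v:  sum over j+l=k of (u^(j) . i l) v^(l).\<close>
definition convect :: "('d::finite) cfield \<Rightarrow> ('d::finite) cfield \<Rightarrow> ('d::finite) cfield" where
  "convect u v = (\<lambda>k. \<chi> m. \<Sum>\<^sub>\<infinity>j.
      (\<Sum>i\<in>UNIV. u j $ i * (\<i> * of_int ((k - j) $ i))) * (v (k - j) $ m))"

definition leray :: "('d::finite) cfield \<Rightarrow> ('d::finite) cfield" where
  "leray f = (\<lambda>k. if k = 0 then f k else
      (\<chi> m. f k $ m - (\<Sum>i\<in>UNIV. of_int (k $ i) * f k $ i) * of_int (k $ m)
                         / complex_of_real (knorm2 k)))"

definition Bop :: "('d::finite) cfield \<Rightarrow> ('d::finite) cfield \<Rightarrow> ('d::finite) cfield" where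
  "Bop u v = leray (convect u v)"

definition C_W :: "nat \<Rightarrow> real \<Rightarrow> real" where
  "C_W d r = 1 / (pi * 2 ^ (d - 1)) * (2 * r - real d) / (2 * r - 1 - real d)"

end

theory Submission
  imports Defs "HOL-Analysis.Summation_Tests"
begin


definition rv :: "int ^ ('d::finite) \<Rightarrow> real ^ 'd" where
  "rv k = (\<chi> i. real_of_int (k $ i))"

lemma knorm2_rv: "knorm2 k = (norm (rv k))\<^sup>2"
  unfolding knorm2_def rv_def norm_vec_def L2_set_def
  by (simp add: sum_nonneg)

lemma kmag_rv: "kmag k = norm (rv k)"
  unfolding kmag_def knorm2_rv by simp

lemma knorm2_kmag: "knorm2 k = (kmag k)\<^sup>2"
  by (simp add: knorm2_rv kmag_rv)

lemma kmag_nonneg: "0 \<le> kmag k" by (simp add: kmag_rv)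

lemma rv_add: "rv (j + l) = rv j + rv l"
  unfolding rv_def by (simp add: vec_eq_iff)

lemma kmag_triangle: "kmag (j + l) \<le> kmag j + kmag l"
  unfolding kmag_rv rv_add by (rule norm_triangle_ineq)

lemma knorm2_ge1:
  fixes k :: "int ^ ('d::finite)"
  assumes "k \<noteq> 0" shows "1 \<le> knorm2 k"
proof -
  obtain i where i: "k $ i \<noteq> 0" using assms by (auto simp: vec_eq_iff)
  have "1 \<le> (real_of_int (k $ i))\<^sup>2"
  proof -
    have "1 \<le> \<bar>k $ i\<bar>" using i by simp
    hence "1 \<le> \<bar>real_of_int (k $ i)\<bar>" by linarith
    thus ?thesis by (metis power2_abs one_le_power)
  qed
  also have "\<dots> \<le> knorm2 k" unfolding knorm2_def
    by (rule member_le_sum) auto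
  finally show ?thesis .
qed

lemma kmag_ge1: "k \<noteq> 0 \<Longrightarrow> 1 \<le> kmag k"
  unfolding kmag_def using knorm2_ge1 by simp

lemma knorm2_powr: "knorm2 k powr s = kmag k powr (2 * s)"
proof (cases "kmag k = 0")
  case True then show ?thesis by (simp add: knorm2_kmag)
next
  case False
  hence "kmag k > 0" using kmag_nonneg[of k] by simp
  hence "knorm2 k = kmag k powr 2" by (simp add: knorm2_kmag powr_realpow)
  thus ?thesis by (simp add: powr_powr)
qed

lemma vnorm2_norm: "vnorm2 a = (norm a)\<^sup>2"
  unfolding vnorm2_def norm_vec_def L2_set_def by (simp add: sum_nonneg)

lemma norm_chi_mult: "norm (\<chi> m. (c::complex) * x $ m) = cmod c * norm x"
  unfolding norm_vec_def by (simp add: norm_mult L2_set_right_distrib)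

lemma cs_complex: "cmod (\<Sum>i\<in>UNIV. (a::complex^'d::finite) $ i * cnj (b $ i)) \<le> norm a * norm b"
proof -
  have "cmod (\<Sum>i\<in>UNIV. a $ i * cnj (b $ i)) \<le> (\<Sum>i\<in>UNIV. cmod (a $ i) * cmod (b $ i))"
    by (rule order_trans[OF norm_sum]) (simp add: norm_mult)
  also have "\<dots> \<le> norm a * norm b"
    using L2_set_mult_ineq[of "\<lambda>i. cmod (a $ i)" "\<lambda>i. cmod (b $ i)" UNIV]
    by (simp add: norm_vec_def)
  finally show ?thesis .
qed

lemma cs_grad: "cmod (\<Sum>i\<in>UNIV. (a::complex^'d::finite) $ i * (\<i> * of_int (l $ i))) \<le> norm a * kmag l"
proof -
  have "cmod (\<Sum>i\<in>UNIV. a $ i * (\<i> * of_int (l $ i))) \<le> (\<Sum>i\<in>UNIV. cmod (a $ i) * \<bar>real_of_int (l $ i)\<bar>)"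
    by (rule order_trans[OF norm_sum]) (simp add: norm_mult)
  also have "\<dots> \<le> norm a * kmag l"
    using L2_set_mult_ineq[of "\<lambda>i. cmod (a $ i)" "\<lambda>i. \<bar>real_of_int (l $ i)\<bar>" UNIV]
    by (simp add: norm_vec_def kmag_rv rv_def)
  finally show ?thesis .
qed


definition L2 :: "('a \<Rightarrow> real) \<Rightarrow> real" where
  "L2 x = sqrt (infsum (\<lambda>k. (x k)\<^sup>2) UNIV)"

lemma L2_nonneg: "0 \<le> L2 x"
  unfolding L2_def by (simp add: infsum_nonneg)

lemma L2_set_le_L2:
  assumes "(\<lambda>k. (x k)\<^sup>2) summable_on UNIV" "finite K" "inj_on g K"
  shows "L2_set (\<lambda>k. x (g k)) K \<le> L2 x"
proof -
  have "(\<Sum>k\<in>K. (x (g k))\<^sup>2) = (\<Sum>k\<in>g ` K. (x k)\<^sup>2)"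
    using assms(3) by (simp add: sum.reindex)
  also have "\<dots> \<le> infsum (\<lambda>k. (x k)\<^sup>2) UNIV"
    by (rule finite_sum_le_infsum[OF assms(1)]) (use assms(2) in auto)
  finally show ?thesis unfolding L2_set_def L2_def by simp
qed

lemma finite_cs:
  assumes "(\<lambda>k. (x k)\<^sup>2) summable_on UNIV" "(\<lambda>k. (y k)\<^sup>2) summable_on UNIV"
    "finite K" "inj_on g1 K" "inj_on g2 K"
    "\<And>k. 0 \<le> x k" "\<And>k. 0 \<le> y k"
  shows "(\<Sum>k\<in>K. x (g1 k) * y (g2 k)) \<le> L2 x * L2 y"
proof -
  have "(\<Sum>k\<in>K. x (g1 k) * y (g2 k)) = (\<Sum>k\<in>K. \<bar>x (g1 k)\<bar> * \<bar>y (g2 k)\<bar>)"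
    using assms(6,7) by simp
  also have "\<dots> \<le> L2_set (\<lambda>k. x (g1 k)) K * L2_set (\<lambda>k. y (g2 k)) K"
    by (rule L2_set_mult_ineq)
  also have "\<dots> \<le> L2 x * L2 y"
    by (intro mult_mono L2_set_le_L2 assms L2_nonneg L2_set_nonneg)
  finally show ?thesis .
qed

lemma conv_summable:
  fixes x y :: "'a::ab_group_add \<Rightarrow> real"
  assumes "(\<lambda>k. (x k)\<^sup>2) summable_on UNIV" "(\<lambda>k. (y k)\<^sup>2) summable_on UNIV"
    "\<And>k. 0 \<le> x k" "\<And>k. 0 \<le> y k"
  shows "(\<lambda>j. x j * y (k - j)) summable_on UNIV"
    and "infsum (\<lambda>j. x j * y (k - j)) UNIV \<le> L2 x * L2 y"
proof -
  have fin: "sum (\<lambda>j. x j * y (k - j)) F \<le> L2 x * L2 y" if "finite F" for F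
    using finite_cs[OF assms(1,2) that, of id "\<lambda>j. k - j"] assms(3,4)
    by (simp add: inj_on_def)
  show s: "(\<lambda>j. x j * y (k - j)) summable_on UNIV"
    by (rule nonneg_bdd_above_summable_on) (use assms fin in \<open>auto intro!: bdd_aboveI2\<close>)
  show "infsum (\<lambda>j. x j * y (k - j)) UNIV \<le> L2 x * L2 y"
    by (rule infsum_le_finite_sums[OF s fin]) 
qed

lemma tri_summable:
  fixes x y z h :: "'a::ab_group_add \<Rightarrow> real"
  assumes "(\<lambda>k. (x k)\<^sup>2) summable_on UNIV" "(\<lambda>k. (y k)\<^sup>2) summable_on UNIV"
    "(\<lambda>k. (z k)\<^sup>2) summable_on UNIV" "(\<lambda>k. (h k)\<^sup>2) summable_on UNIV"
    "\<And>k. 0 \<le> x k" "\<And>k. 0 \<le> y k" "\<And>k. 0 \<le> z k" "\<And>k. 0 \<le> h k"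
  shows "(\<lambda>(k,j). z k * (h j * x j * y (k - j))) summable_on UNIV"
    and "infsum (\<lambda>(k,j). z k * (h j * x j * y (k - j))) UNIV \<le> L2 z * (L2 h * L2 x * L2 y)"
proof -
  let ?f = "\<lambda>(k,j). z k * (h j * x j * y (k - j))"
  have nn: "0 \<le> ?f p" for p using assms(5-8) by (auto simp: case_prod_beta)
  have fin: "sum ?f F \<le> L2 z * (L2 h * L2 x * L2 y)" if F: "finite F" for F
  proof -
    define K where "K = fst ` F"
    define J where "J = snd ` F"
    have KJ: "finite K" "finite J" using F by (auto simp: K_def J_def)
    have "F \<subseteq> K \<times> J" by (force simp: K_def J_def)
    hence "sum ?f F \<le> sum ?f (K \<times> J)"
      by (intro sum_mono2) (use KJ nn in auto)
    also have "\<dots> = (\<Sum>k\<in>K. \<Sum>j\<in>J. z k * (h j * x j * y (k - j)))"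
      by (simp add: sum.cartesian_product)
    also have "\<dots> = (\<Sum>j\<in>J. h j * x j * (\<Sum>k\<in>K. z k * y (k - j)))"
      by (subst sum.swap) (simp add: sum_distrib_left mult_ac)
    also have "\<dots> \<le> (\<Sum>j\<in>J. h j * x j * (L2 z * L2 y))"
    proof (rule sum_mono)
      fix j assume "j \<in> J"
      have "(\<Sum>k\<in>K. z k * y (k - j)) \<le> L2 z * L2 y"
        using finite_cs[OF assms(3,2) KJ(1), of id "\<lambda>k. k - j"] assms(6,7)
        by (simp add: inj_on_def)
      thus "h j * x j * (\<Sum>k\<in>K. z k * y (k - j)) \<le> h j * x j * (L2 z * L2 y)"
        using assms(5,8) by (intro mult_left_mono) auto
    qed
    also have "\<dots> = (\<Sum>j\<in>J. h j * x j) * (L2 z * L2 y)"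
      by (simp add: sum_distrib_right)
    also have "\<dots> \<le> (L2 h * L2 x) * (L2 z * L2 y)"
      using finite_cs[OF assms(4,1) KJ(2), of id id] assms(5,8)
      by (intro mult_right_mono) (auto intro: mult_nonneg_nonneg L2_nonneg)
    finally show ?thesis by (simp add: mult_ac)
  qed
  show s: "?f summable_on UNIV"
    by (rule nonneg_bdd_above_summable_on) (use nn fin in \<open>auto intro!: bdd_aboveI2\<close>)
  show "infsum ?f UNIV \<le> L2 z * (L2 h * L2 x * L2 y)"
    by (rule infsum_le_finite_sums[OF s fin])
qed


definition f1 :: "real \<Rightarrow> int \<Rightarrow> real" where
  "f1 a n = (1 + (real_of_int n)\<^sup>2) powr (-a)"

lemma f1_nonneg: "0 \<le> f1 a n" by (simp add: f1_def)

lemma f1_nat_summable: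
  assumes "a > 1/2"
  shows "(\<lambda>n::nat. f1 a (int n)) summable_on UNIV"
proof -
  have "summable (\<lambda>n::nat. real n powr (-2*a))"
    using assms by (subst summable_real_powr_iff) simp
  hence "summable (\<lambda>n::nat. f1 a (int n))"
  proof (rule summable_comparison_test')
    fix n :: nat assume "n \<ge> 1"
    hence n: "real n > 0" by simp
    have e1: "(real n powr 2) powr (-a) = real n powr (2 * (-a))" by (rule powr_powr)
    have e2: "real n powr 2 = (real n)\<^sup>2" using powr_realpow[OF n, of 2] by simp
    have "real n powr (-2*a) = ((real n)\<^sup>2) powr (-a)" using e1 e2 by simp
    also have "\<dots> \<ge> (1 + (real n)\<^sup>2) powr (-a)"
      by (rule powr_mono2') (use assms n in auto)
    finally show "norm (f1 a (int n)) \<le> real n powr (-2*a)"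
      by (simp add: f1_def)
  qed
  moreover have "((\<lambda>n. f1 a (int n)) summable_on UNIV) = summable (\<lambda>n. f1 a (int n))"
    by (rule summable_on_UNIV_nonneg_real_iff) (rule f1_nonneg)
  ultimately show ?thesis by blast
qed

lemma f1_summable:
  assumes "a > 1/2"
  shows "f1 a summable_on UNIV"
proof -
  have 1: "f1 a summable_on (range int)"
    by (subst summable_on_reindex) (auto simp: o_def f1_nat_summable[OF assms])
  have e: "(f1 a \<circ> (\<lambda>n::nat. - int n)) = (\<lambda>n. f1 a (int n))" by (auto simp: f1_def)
  have 2: "f1 a summable_on (range (\<lambda>n. - int n))"
    by (subst summable_on_reindex) (auto simp: e f1_nat_summable[OF assms] inj_on_def)
  have "x \<in> range int \<union> range (\<lambda>n::nat. - int n)" for x :: int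
  proof (cases "x \<ge> 0")
    case True thus ?thesis by (auto intro: image_eqI[of _ _ "nat x"])
  next
    case False thus ?thesis by (auto intro!: image_eqI[of _ _ "nat (-x)"])
  qed
  hence "UNIV = range int \<union> range (\<lambda>n::nat. - int n)" by auto
  thus ?thesis using summable_on_union[OF 1 2] by simp
qed

lemma prod_fun_summable:
  fixes f :: "int \<Rightarrow> real"
  assumes "f summable_on UNIV" "\<And>n. 0 \<le> f n"
  shows "(\<lambda>g::'d::finite \<Rightarrow> int. \<Prod>i\<in>UNIV. f (g i)) summable_on UNIV"
proof (rule nonneg_bdd_above_summable_on)
  show "0 \<le> (\<Prod>i\<in>UNIV. f (g i))" for g by (simp add: assms(2) prod_nonneg)
  show "bdd_above (sum (\<lambda>g::'d \<Rightarrow> int. \<Prod>i\<in>UNIV. f (g i)) ` {F. F \<subseteq> UNIV \<and> finite F})"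
  proof (rule bdd_aboveI2)
    fix F :: "('d \<Rightarrow> int) set" assume "F \<in> {F. F \<subseteq> UNIV \<and> finite F}"
    hence F: "finite F" by simp
    define B where "B i = (\<lambda>g. g i) ` F" for i
    have Bf: "finite (B i)" for i using F by (simp add: B_def)
    have sub: "F \<subseteq> PiE UNIV B" by (auto simp: B_def PiE_UNIV_domain)
    have finP: "finite (PiE UNIV B)" by (rule finite_PiE) (auto simp: Bf)
    have "sum (\<lambda>g. \<Prod>i\<in>UNIV. f (g i)) F \<le> sum (\<lambda>g. \<Prod>i\<in>UNIV. f (g i)) (PiE UNIV B)"
      by (rule sum_mono2[OF finP sub]) (simp add: assms(2) prod_nonneg)
    also have "\<dots> = infsum (\<lambda>g. \<Prod>i\<in>UNIV. f (g i)) (PiE UNIV B)"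
      using finP by simp
    also have "\<dots> = (\<Prod>i\<in>UNIV. infsum f (B i))"
      by (rule infsum_prod_PiE_abs) (auto simp: Bf)
    also have "\<dots> = (\<Prod>i\<in>UNIV. sum f (B i))" by (simp add: Bf)
    also have "\<dots> \<le> (\<Prod>i\<in>(UNIV::'d set). infsum f UNIV)"
    proof (rule prod_mono)
      fix i :: 'd
      show "0 \<le> sum f (B i) \<and> sum f (B i) \<le> infsum f UNIV"
        using finite_sum_le_infsum[OF assms(1) Bf[of i]] assms(2) by (auto intro: sum_nonneg)
    qed
    finally show "sum (\<lambda>g. \<Prod>i\<in>UNIV. f (g i)) F \<le> (\<Prod>i\<in>(UNIV::'d set). infsum f UNIV)" .
  qed
qed

lemma prod_vec_summable:
  fixes f :: "int \<Rightarrow> real"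
  assumes "f summable_on UNIV" "\<And>n. 0 \<le> f n"
  shows "(\<lambda>j::int^'d::finite. \<Prod>i\<in>UNIV. f (j $ i)) summable_on UNIV"
proof -
  have "inj (vec_lambda :: ('d \<Rightarrow> int) \<Rightarrow> int^'d)"
    by (metis inj_def vec_lambda_inverse UNIV_I)
  moreover have "range (vec_lambda :: ('d \<Rightarrow> int) \<Rightarrow> int^'d) = UNIV"
    by (metis surj_def vec_lambda_eta)
  ultimately show ?thesis
    using summable_on_reindex[of "vec_lambda :: ('d \<Rightarrow> int) \<Rightarrow> int^'d" UNIV
        "\<lambda>j::int^'d. \<Prod>i\<in>UNIV. f (j $ i)"] prod_fun_summable[OF assms, where 'd='d]
    by (simp add: o_def)
qed

definition kern :: "int ^ ('d::finite) \<Rightarrow> real" where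
  "kern j = kmag j powr (-(real CARD('d) + 1))"

lemma kern_bound:
  fixes j :: "int ^ ('d::finite)"
  shows "kern j \<le> 2 powr ((real CARD('d) + 1)/2) *
     (\<Prod>i\<in>UNIV. f1 ((real CARD('d) + 1) / (2 * real CARD('d))) (j $ i))"
proof (cases "j = 0")
  case True
  then show ?thesis by (simp add: kern_def kmag_def knorm2_def prod_nonneg f1_nonneg)
next
  case False
  define d where "d = real CARD('d)"
  define a where "a = (d + 1) / (2 * d)"
  define q where "q = knorm2 j"
  have d0: "d > 0" by (simp add: d_def)
  have q1: "q \<ge> 1" using knorm2_ge1[OF False] by (simp add: q_def)
  have "(\<Prod>i\<in>UNIV. 1 + (real_of_int (j $ i))\<^sup>2) \<le> (\<Prod>i\<in>(UNIV::'d set). 2 * q)"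
  proof (rule prod_mono)
    fix i :: 'd
    have "(real_of_int (j $ i))\<^sup>2 \<le> q" unfolding q_def knorm2_def
      by (rule member_le_sum) auto
    thus "0 \<le> 1 + (real_of_int (j $ i))\<^sup>2 \<and> 1 + (real_of_int (j $ i))\<^sup>2 \<le> 2 * q"
      using q1 by simp
  qed
  also have "\<dots> = (2 * q) powr d" using q1 by (simp add: d_def powr_realpow)
  finally have P: "(\<Prod>i\<in>UNIV. 1 + (real_of_int (j $ i))\<^sup>2) \<le> (2 * q) powr d" .
  have Ppos: "0 < (\<Prod>i\<in>(UNIV::'d set). 1 + (real_of_int (j $ i))\<^sup>2)"
    by (rule prod_pos) (simp add: add_pos_nonneg)
  have "(\<Prod>i\<in>UNIV. f1 a (j $ i)) = (\<Prod>i\<in>UNIV. 1 + (real_of_int (j $ i))\<^sup>2) powr (-a)"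
    by (simp add: f1_def prod_powr_distrib)
  also have "\<dots> \<ge> ((2 * q) powr d) powr (-a)"
    by (rule powr_mono2'[OF _ Ppos P]) (use d0 in \<open>simp add: a_def\<close>)
  also have "((2 * q) powr d) powr (-a) = (2 * q) powr (d * (-a))" by (rule powr_powr)
  also have "d * (-a) = - ((d + 1)/2)" using d0 by (simp add: a_def field_simps)
  also have "(2 * q) powr (- ((d + 1)/2)) = 2 powr (- ((d + 1)/2)) * q powr (- ((d + 1)/2))"
    by (rule powr_mult)
  finally have "(\<Prod>i\<in>UNIV. f1 a (j $ i)) \<ge> 2 powr (- ((d + 1)/2)) * q powr (- ((d + 1)/2))" .
  moreover have "q powr (- ((d + 1)/2)) = kern j"
    by (simp add: q_def knorm2_powr kern_def d_def add_divide_distrib)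
  ultimately have "2 powr ((d + 1)/2) * (\<Prod>i\<in>UNIV. f1 a (j $ i)) \<ge> 2 powr ((d + 1)/2) * (2 powr (- ((d + 1)/2)) * kern j)"
    by (intro mult_left_mono) auto
  also have "2 powr ((d + 1)/2) * (2 powr (- ((d + 1)/2)) * kern j) = kern j"
    by (simp add: powr_minus field_simps)
  finally show ?thesis by (simp add: a_def d_def)
qed

lemma kern_summable: "(kern :: int^('d::finite) \<Rightarrow> real) summable_on UNIV"
proof -
  define a where "a = (real CARD('d) + 1) / (2 * real CARD('d))"
  have a: "a > 1/2" by (simp add: a_def field_simps)
  have "(\<lambda>j::int^'d. \<Prod>i\<in>UNIV. f1 a (j $ i)) summable_on UNIV"
    by (rule prod_vec_summable[OF f1_summable[OF a] f1_nonneg])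
  hence "(\<lambda>j::int^'d. 2 powr ((real CARD('d) + 1)/2) * (\<Prod>i\<in>UNIV. f1 a (j $ i))) summable_on UNIV"
    by (rule summable_on_cmult_right)
  thus ?thesis
  proof (rule summable_on_comparison_test)
    fix x :: "int^'d"
    show "kern x \<le> 2 powr ((real CARD('d) + 1)/2) * (\<Prod>i\<in>UNIV. f1 a (x $ i))"
      using kern_bound[of x] by (simp add: a_def)
    show "0 \<le> kern x" by (simp add: kern_def)
  qed
qed


lemma pw_real:
  fixes a b c r \<beta> X Y Z :: real
  assumes a: "a \<ge> 1" and b: "b \<ge> 1" and c: "0 \<le> c" "c \<le> a + b" and r: "r > 1/2"
    and \<beta>: "\<beta> > 0" and XYZ: "X \<ge> 0" "Y \<ge> 0" "Z \<ge> 0"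
  shows "c powr (2*r) * exp (2*\<beta>*c) * Z * (X * b * Y) \<le> 2 powr r *
    ((c powr (r+1/2) * exp (\<beta>*c) * Z) * (a powr (-r) * (a powr r * exp (\<beta>*a) * X) * (b powr (r+1/2) * exp (\<beta>*b) * Y))
   + (c powr (r+1/2) * exp (\<beta>*c) * Z) * (b powr (-r) * (b powr r * exp (\<beta>*b) * Y) * (a powr (r+1/2) * exp (\<beta>*a) * X)))"
proof -
  define M where "M = max a b"
  have M1: "M \<ge> 1" using a by (simp add: M_def)
  have "c powr (r - 1/2) \<le> (a + b) powr (r - 1/2)"
    using c r by (intro powr_mono2) auto
  also have "\<dots> \<le> (2 * M) powr (r - 1/2)"
    using a b r by (intro powr_mono2) (auto simp: M_def)
  also have "\<dots> = 2 powr (r - 1/2) * M powr (r - 1/2)" by (rule powr_mult) 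
  also have "\<dots> \<le> 2 powr r * M powr (r - 1/2)"
    by (intro mult_right_mono) auto
  finally have c1: "c powr (r - 1/2) \<le> 2 powr r * M powr (r - 1/2)" .
  have "b * M powr (r - 1/2) \<le> M * M powr (r - 1/2)"
    by (intro mult_right_mono) (auto simp: M_def)
  also have "\<dots> = M powr (r + 1/2)"
  proof -
    have "M powr (r + 1/2) = M powr (1 + (r - 1/2))" by (simp add: add.commute)
    also have "\<dots> = M powr 1 * M powr (r - 1/2)" by (rule powr_add)
    finally show ?thesis using M1 by simp
  qed
  also have "\<dots> \<le> a powr (r + 1/2) + b powr (r + 1/2)"
    by (simp add: M_def max_def)
  finally have c2: "b * M powr (r - 1/2) \<le> a powr (r + 1/2) + b powr (r + 1/2)" .
  have c3: "c powr (2*r) = c powr (r+1/2) * c powr (r - 1/2)"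
    by (simp add: powr_add[symmetric])
  have bc: "\<beta>*c \<le> \<beta>*a + \<beta>*b" using mult_left_mono[OF c(2), of \<beta>] \<beta> by (simp add: algebra_simps)
  have e: "exp (2*\<beta>*c) \<le> exp (\<beta>*c) * (exp (\<beta>*a) * exp (\<beta>*b))"
  proof -
    have "2*\<beta>*c \<le> \<beta>*c + (\<beta>*a + \<beta>*b)" using bc by simp
    thus ?thesis by (simp add: exp_add[symmetric])
  qed
  have ar: "a powr (-r) * a powr r = 1" and br: "b powr (-r) * b powr r = 1"
    using a b by (simp_all add: powr_add[symmetric])
  define K where "K = c powr (r+1/2) * exp (\<beta>*c) * Z"
  have K0: "K \<ge> 0" using XYZ by (simp add: K_def)
  define E where "E = exp (\<beta>*a) * exp (\<beta>*b) * X * Y"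
  have E0: "E \<ge> 0" using XYZ by (simp add: E_def)
  have "c powr (2*r) * exp (2*\<beta>*c) * Z * (X * b * Y) = K * (c powr (r - 1/2) * b) * (exp (2*\<beta>*c) / exp (\<beta>*c)) * X * Y"
    unfolding c3 K_def by (simp add: exp_add[symmetric] mult_ac)
  also have "exp (2*\<beta>*c) / exp (\<beta>*c) = exp (\<beta> * c)"
    by (simp add: exp_diff[symmetric])
  also have "K * (c powr (r - 1/2) * b) * exp (\<beta> * c) * X * Y = K * (c powr (r - 1/2) * b) * (exp (\<beta> * c) * X * Y)"
    by (simp add: mult_ac)
  also have "\<dots> \<le> K * (2 powr r * (a powr (r + 1/2) + b powr (r + 1/2))) * (exp (\<beta> * a + \<beta> * b) * X * Y)"
  proof -
    have "c powr (r - 1/2) * b \<le> (2 powr r * M powr (r - 1/2)) * b"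
      using c1 b by (intro mult_right_mono) auto
    also have "\<dots> = 2 powr r * (b * M powr (r - 1/2))" by simp
    also have "\<dots> \<le> 2 powr r * (a powr (r + 1/2) + b powr (r + 1/2))"
      using c2 by (intro mult_left_mono) auto
    finally have f1: "c powr (r - 1/2) * b \<le> 2 powr r * (a powr (r + 1/2) + b powr (r + 1/2))" .
    have f2: "exp (\<beta> * c) * X * Y \<le> exp (\<beta> * a + \<beta> * b) * X * Y"
      using bc XYZ by (intro mult_right_mono) auto
    have g: "K * (c powr (r - 1/2) * b) \<le> K * (2 powr r * (a powr (r + 1/2) + b powr (r + 1/2)))"
      by (rule mult_left_mono[OF f1 K0])
    show ?thesis
      by (rule mult_mono[OF g f2]) (use K0 XYZ in auto)
  qed
  also have "\<dots> = 2 powr r * (K * (a powr (r + 1/2) * E + b powr (r + 1/2) * E))"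
    by (simp add: E_def exp_add algebra_simps)
  also have "\<dots> = 2 powr r * (K * ((a powr (-r) * a powr r) * b powr (r + 1/2) * E + (b powr (-r) * b powr r) * a powr (r + 1/2) * E))"
    by (simp only: ar br mult_1_left) (simp add: algebra_simps)
  also have "\<dots> = 2 powr r *
    ((c powr (r+1/2) * exp (\<beta>*c) * Z) * (a powr (-r) * (a powr r * exp (\<beta>*a) * X) * (b powr (r+1/2) * exp (\<beta>*b) * Y))
   + (c powr (r+1/2) * exp (\<beta>*c) * Z) * (b powr (-r) * (b powr r * exp (\<beta>*b) * Y) * (a powr (r+1/2) * exp (\<beta>*a) * X)))"
    by (simp add: K_def E_def algebra_simps)
  finally show ?thesis .
qed


definition Nf :: "real \<Rightarrow> real \<Rightarrow> ('d::finite) cfield \<Rightarrow> int^'d \<Rightarrow> real" where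
  "Nf \<beta> t f k = kmag k powr t * exp (\<beta> * kmag k) * norm (f k)"

definition hk :: "real \<Rightarrow> int^('d::finite) \<Rightarrow> real" where
  "hk r j = kmag j powr (-r)"

lemma Nf_nonneg: "0 \<le> Nf \<beta> t f k" by (simp add: Nf_def)
lemma hk_nonneg: "0 \<le> hk r j" by (simp add: hk_def)

lemma norm_Apow: "norm (Apow s f k) = kmag k powr (2 * s) * norm (f k)"
  by (simp add: Apow_def knorm2_powr)

lemma norm_expA: "norm (expA b f k) = exp (b * kmag k) * norm (f k)"
  by (simp add: expA_def)

lemma vnorm2_A14: "vnorm2 (Apow (r/2) (expA \<beta> (Apow (1/4) f)) k) = (Nf \<beta> (r+1/2) f k)\<^sup>2"
proof -
  have "kmag k powr r * kmag k powr (1/2) = kmag k powr (r + 1/2)"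
    by (simp add: powr_add)
  thus ?thesis
    by (simp add: vnorm2_norm norm_Apow norm_expA Nf_def mult_ac)
qed

lemma vnorm2_A0: "vnorm2 (Apow (r/2) (expA \<beta> f) k) = (Nf \<beta> r f k)\<^sup>2"
  by (simp add: vnorm2_norm norm_Apow norm_expA Nf_def mult_ac)

lemma gev_finite_iff: "gev_finite r \<beta> (Apow (1/4) f) \<longleftrightarrow> (\<lambda>k. (Nf \<beta> (r+1/2) f k)\<^sup>2) summable_on UNIV"
  unfolding gev_finite_def vnorm2_A14 ..

lemma gev_norm_A14: "gev_norm r \<beta> (Apow (1/4) f) = sqrt ((2*pi)^CARD('d)) * L2 (Nf \<beta> (r+1/2) (f :: ('d::finite) cfield))"
  unfolding gev_norm_def L2norm_def vnorm2_A14 L2_def by (simp add: real_sqrt_mult)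

lemma gev_norm_0: "gev_norm r \<beta> f = sqrt ((2*pi)^CARD('d)) * L2 (Nf \<beta> r (f :: ('d::finite) cfield))"
  unfolding gev_norm_def L2norm_def vnorm2_A0 L2_def by (simp add: real_sqrt_mult)

lemma Nf_mono:
  assumes "f 0 = 0" "t \<le> t'" "\<beta> \<ge> 0"
  shows "Nf \<beta> t f k \<le> Nf \<beta> t' f k"
proof (cases "k = 0")
  case True thus ?thesis using assms by (simp add: Nf_def)
next
  case False
  hence "1 \<le> kmag k" by (rule kmag_ge1)
  hence "kmag k powr t \<le> kmag k powr t'" using assms(2) by (intro powr_mono) auto
  thus ?thesis unfolding Nf_def by (intro mult_right_mono) auto
qed

lemma Nf_sq_summable_mono:
  assumes "f 0 = 0" "t \<le> t'" "\<beta> \<ge> 0" "(\<lambda>k. (Nf \<beta> t' f k)\<^sup>2) summable_on UNIV"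
  shows "(\<lambda>k. (Nf \<beta> t f k)\<^sup>2) summable_on UNIV"
  by (rule summable_on_comparison_test[OF assms(4)])
     (use Nf_mono[of f t t' \<beta>] assms in \<open>auto intro!: power_mono Nf_nonneg\<close>)

lemma hk_sq_le_kern:
  assumes "r > (real CARD('d) + 1) / 2"
  shows "(hk r (j :: int^('d::finite)))\<^sup>2 \<le> kern j"
proof (cases "j = 0")
  case True thus ?thesis by (simp add: hk_def kern_def kmag_def knorm2_def)
next
  case False
  hence k1: "1 \<le> kmag j" by (rule kmag_ge1)
  have "(hk r j)\<^sup>2 = (kmag j powr (-r)) powr 2"
    using k1 by (simp add: hk_def powr_realpow)
  also have "\<dots> = kmag j powr (-r * 2)" by (rule powr_powr)
  also have "\<dots> \<le> kmag j powr (-(real CARD('d) + 1))"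
    using k1 assms by (intro powr_mono) auto
  finally show ?thesis by (simp add: kern_def)
qed

lemma hk_sq_summable:
  assumes "r > (real CARD('d) + 1) / 2"
  shows "(\<lambda>j. (hk r (j :: int^('d::finite)))\<^sup>2) summable_on UNIV"
  by (rule summable_on_comparison_test[OF kern_summable]) (use hk_sq_le_kern[OF assms] in auto)

lemma L2_hk_le:
  assumes "r > (real CARD('d) + 1) / 2"
  shows "L2 (hk r :: int^('d::finite) \<Rightarrow> real) \<le> sqrt (infsum (kern :: int^'d \<Rightarrow> real) UNIV)"
  unfolding L2_def
  by (intro real_sqrt_le_mono infsum_mono hk_sq_summable[OF assms] kern_summable hk_sq_le_kern[OF assms])


lemma G_norm: "norm (Apow r (expA b w) k) = kmag k powr (2 * r) * exp (b * kmag k) * norm (w k)"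
  by (simp add: norm_Apow norm_expA)

lemma G_divfree:
  assumes "in_HC w"
  shows "(\<Sum>i\<in>UNIV. of_int (k $ i) * (Apow s (expA b w) k $ i)) = 0"
proof -
  have "(\<Sum>i\<in>UNIV. of_int (k $ i) * (Apow s (expA b w) k $ i))
      = of_real (knorm2 k powr s * exp (b * kmag k)) * (\<Sum>i\<in>UNIV. of_int (k $ i) * (w k $ i))"
    by (simp add: Apow_def expA_def scaleR_conv_of_real[where 'a=complex] sum_distrib_left mult_ac)
  thus ?thesis using assms by (simp add: in_HC_def)
qed

lemma leray_inner:
  assumes "(\<Sum>i\<in>UNIV. of_int (k $ i) * (g $ i)) = (0::complex)"
  shows "(\<Sum>i\<in>UNIV. leray f k $ i * cnj (g $ i)) = (\<Sum>i\<in>UNIV. f k $ i * cnj (g $ i))"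
proof (cases "k = 0")
  case True thus ?thesis by (simp add: leray_def)
next
  case False
  define S where "S = (\<Sum>i\<in>UNIV. of_int (k $ i) * f k $ i)"
  define q where "q = complex_of_real (knorm2 k)"
  have z: "(\<Sum>i\<in>UNIV. of_int (k $ i) * cnj (g $ i)) = 0"
  proof -
    have "(\<Sum>i\<in>UNIV. of_int (k $ i) * cnj (g $ i)) = cnj (\<Sum>i\<in>UNIV. of_int (k $ i) * (g $ i))"
      by simp
    thus ?thesis using assms by simp
  qed
  have "(\<Sum>i\<in>UNIV. leray f k $ i * cnj (g $ i))
     = (\<Sum>i\<in>UNIV. f k $ i * cnj (g $ i) - (S / q) * (of_int (k $ i) * cnj (g $ i)))"
    using False by (intro sum.cong) (auto simp: leray_def S_def q_def algebra_simps)
  also have "\<dots> = (\<Sum>i\<in>UNIV. f k $ i * cnj (g $ i)) - (S / q) * (\<Sum>i\<in>UNIV. of_int (k $ i) * cnj (g $ i))"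
    by (simp add: sum_subtractf sum_distrib_left)
  finally show ?thesis using z by simp
qed

lemma Nf_ge_norm:
  assumes "f 0 = 0" "\<beta> \<ge> 0" "t \<ge> 0"
  shows "norm (f k) \<le> Nf \<beta> t f k"
proof (cases "k = 0")
  case True thus ?thesis using assms by (simp add: Nf_def)
next
  case False
  hence k1: "1 \<le> kmag k" by (rule kmag_ge1)
  have "1 \<le> kmag k powr t" using k1 assms by (simp add: ge_one_powr_ge_zero)
  moreover have "1 \<le> exp (\<beta> * kmag k)" using k1 assms by simp
  ultimately have "1 \<le> kmag k powr t * exp (\<beta> * kmag k)" by (metis mult_mono' mult_1 zero_le_one)
  thus ?thesis unfolding Nf_def using mult_right_mono[of 1 _ "norm (f k)"] by simp
qed

lemma Nf_ge_grad:
  assumes "f 0 = 0" "\<beta> \<ge> 0" "t \<ge> 1"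
  shows "kmag k * norm (f k) \<le> Nf \<beta> t f k"
proof (cases "k = 0")
  case True thus ?thesis using assms by (simp add: Nf_def)
next
  case False
  hence k1: "1 \<le> kmag k" by (rule kmag_ge1)
  have "kmag k = kmag k powr 1" using k1 by simp
  also have "\<dots> \<le> kmag k powr t" using k1 assms by (intro powr_mono) auto
  finally have a: "kmag k \<le> kmag k powr t" .
  have "1 \<le> exp (\<beta> * kmag k)" using k1 assms by simp
  hence "kmag k \<le> kmag k powr t * exp (\<beta> * kmag k)"
    using a mult_mono[OF a \<open>1 \<le> exp _\<close>] by simp
  thus ?thesis unfolding Nf_def by (intro mult_right_mono) auto
qed

lemma convect_bound:
  assumes u0: "u 0 = 0" and v0: "v 0 = 0" and \<beta>: "\<beta> \<ge> 0" and t: "t \<ge> 1"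
    and su: "(\<lambda>k. (Nf \<beta> t u k)\<^sup>2) summable_on UNIV"
    and sv: "(\<lambda>k. (Nf \<beta> t v k)\<^sup>2) summable_on UNIV"
  shows "(\<lambda>j. norm (u j) * kmag (k - j) * norm (v (k - j))) summable_on UNIV"
    and "norm (convect u v k) \<le> infsum (\<lambda>j. norm (u j) * kmag (k - j) * norm (v (k - j))) UNIV"
proof -
  let ?c = "\<lambda>j. norm (u j) * kmag (k - j) * norm (v (k - j))"
  have xy: "(\<lambda>j. Nf \<beta> t u j * Nf \<beta> t v (k - j)) summable_on UNIV"
    by (rule conv_summable(1)[OF su sv Nf_nonneg Nf_nonneg])
  have cle: "?c j \<le> Nf \<beta> t u j * Nf \<beta> t v (k - j)" for j
  proof -
    have "?c j = norm (u j) * (kmag (k - j) * norm (v (k - j)))" by simp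
    also have "\<dots> \<le> Nf \<beta> t u j * Nf \<beta> t v (k - j)"
      using Nf_ge_norm[of u \<beta> t j] Nf_ge_grad[of v \<beta> t "k - j"] t u0 v0 \<beta>
      by (intro mult_mono) (auto simp: kmag_nonneg Nf_nonneg)
    finally show ?thesis .
  qed
  show cs: "?c summable_on UNIV"
    by (rule summable_on_comparison_test[OF xy cle]) (simp add: kmag_nonneg)
  define F where "F j = (\<chi> m. (\<Sum>i\<in>UNIV. u j $ i * (\<i> * of_int ((k - j) $ i))) * (v (k - j) $ m))" for j
  have nF: "norm (F j) \<le> ?c j" for j
  proof -
    have "norm (F j) = cmod (\<Sum>i\<in>UNIV. u j $ i * (\<i> * of_int ((k - j) $ i))) * norm (v (k - j))"
      unfolding F_def by (rule norm_chi_mult)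
    also have "\<dots> \<le> ?c j" by (intro mult_right_mono cs_grad) auto
    finally show ?thesis .
  qed
  have Fa: "(\<lambda>j. norm (F j)) summable_on UNIV"
    by (rule summable_on_comparison_test[OF cs nF]) auto
  hence "F summable_on UNIV" by (rule abs_summable_summable)
  then obtain S where S: "(F has_sum S) UNIV" by (auto simp: summable_on_def)
  have "convect u v k = S"
  proof (subst vec_eq_iff, intro allI)
    fix m
    have "((\<lambda>j. F j $ m) has_sum S $ m) UNIV"
      by (rule has_sum_bounded_linear[OF bounded_linear_vec_nth S])
    hence "infsum (\<lambda>j. F j $ m) UNIV = S $ m" by (rule infsumI)
    thus "convect u v k $ m = S $ m" by (simp add: convect_def F_def)
  qed
  also have "S = infsum F UNIV" using S by (simp add: infsumI)
  finally have "norm (convect u v k) = norm (infsum F UNIV)" by simp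
  also have "\<dots> \<le> infsum (\<lambda>j. norm (F j)) UNIV" by (rule norm_infsum_bound[OF Fa])
  also have "\<dots> \<le> infsum ?c UNIV" by (rule infsum_mono[OF Fa cs nF])
  finally show "norm (convect u v k) \<le> infsum ?c UNIV" .
qed


lemma pointwise_T:
  fixes u v w :: "('d::finite) cfield"
  assumes u0: "u 0 = 0" and v0: "v 0 = 0" and r: "r > 1/2" and \<beta>: "\<beta> > 0"
  shows "norm (Apow r (expA (2*\<beta>) w) k) * (norm (u j) * kmag (k - j) * norm (v (k - j)))
     \<le> 2 powr r * (Nf \<beta> (r+1/2) w k * (hk r j * Nf \<beta> r u j * Nf \<beta> (r+1/2) v (k - j))
                 + Nf \<beta> (r+1/2) w k * (hk r (k - j) * Nf \<beta> r v (k - j) * Nf \<beta> (r+1/2) u (k - (k - j))))"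
proof (cases "u j = 0 \<or> v (k - j) = 0")
  case True
  have "0 \<le> 2 powr r * (Nf \<beta> (r+1/2) w k * (hk r j * Nf \<beta> r u j * Nf \<beta> (r+1/2) v (k - j))
                 + Nf \<beta> (r+1/2) w k * (hk r (k - j) * Nf \<beta> r v (k - j) * Nf \<beta> (r+1/2) u (k - (k - j))))"
    by (intro mult_nonneg_nonneg add_nonneg_nonneg) (auto simp: Nf_nonneg hk_nonneg)
  with True show ?thesis by auto
next
  case False
  hence j0: "j \<noteq> 0" and l0: "k - j \<noteq> 0" using u0 v0 by auto
  have a: "kmag j \<ge> 1" using j0 by (rule kmag_ge1)
  have b: "kmag (k - j) \<ge> 1" using l0 by (rule kmag_ge1)
  have c: "kmag k \<le> kmag j + kmag (k - j)"
    using kmag_triangle[of j "k - j"] by simp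
  have "norm (Apow r (expA (2*\<beta>) w) k) * (norm (u j) * kmag (k - j) * norm (v (k - j)))
      = kmag k powr (2*r) * exp (2*\<beta>*kmag k) * norm (w k) * (norm (u j) * kmag (k - j) * norm (v (k - j)))"
    by (simp add: G_norm)
  also have "\<dots> \<le> 2 powr r *
    ((kmag k powr (r+1/2) * exp (\<beta>*kmag k) * norm (w k)) * (kmag j powr (-r) * (kmag j powr r * exp (\<beta>*kmag j) * norm (u j)) * (kmag (k - j) powr (r+1/2) * exp (\<beta>*kmag (k - j)) * norm (v (k - j))))
   + (kmag k powr (r+1/2) * exp (\<beta>*kmag k) * norm (w k)) * (kmag (k - j) powr (-r) * (kmag (k - j) powr r * exp (\<beta>*kmag (k - j)) * norm (v (k - j))) * (kmag j powr (r+1/2) * exp (\<beta>*kmag j) * norm (u j))))"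
    by (rule pw_real[OF a b kmag_nonneg c r \<beta>]) auto
  also have "\<dots> = 2 powr r * (Nf \<beta> (r+1/2) w k * (hk r j * Nf \<beta> r u j * Nf \<beta> (r+1/2) v (k - j))
                 + Nf \<beta> (r+1/2) w k * (hk r (k - j) * Nf \<beta> r v (k - j) * Nf \<beta> (r+1/2) u (k - (k - j))))"
    by (simp add: Nf_def hk_def)
  finally show ?thesis .
qed


lemma main_bound:
  fixes u v w :: "('d::finite) cfield"
  assumes r: "r > (real CARD('d) + 1) / 2" and \<beta>: "\<beta> > 0"
    and HC: "in_HC u" "in_HC v" "in_HC w"
    and su: "(\<lambda>k. (Nf \<beta> (r+1/2) u k)\<^sup>2) summable_on UNIV"
    and sv: "(\<lambda>k. (Nf \<beta> (r+1/2) v k)\<^sup>2) summable_on UNIV"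
    and sw: "(\<lambda>k. (Nf \<beta> (r+1/2) w k)\<^sup>2) summable_on UNIV"
  shows "cmod (inner_L2 (Bop u v) (Apow r (expA (2 * \<beta>) w)))
    \<le> (2*pi)^CARD('d) * (2 powr r * (L2 (Nf \<beta> (r+1/2) w) * (L2 (hk r :: int^'d \<Rightarrow> real) * L2 (Nf \<beta> r u) * L2 (Nf \<beta> (r+1/2) v))
         + L2 (Nf \<beta> (r+1/2) w) * (L2 (hk r :: int^'d \<Rightarrow> real) * L2 (Nf \<beta> r v) * L2 (Nf \<beta> (r+1/2) u))))"
proof -
  have d1: "1 \<le> real CARD('d)" by simp
  hence "1 \<le> (real CARD('d) + 1) / 2" by simp
  hence r12: "r > 1/2" using r by linarith
  have u0: "u 0 = 0" and v0: "v 0 = 0" using HC by (auto simp: in_HC_def)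
  define G where "G = Apow r (expA (2*\<beta>) w)"
  define W where "W = Nf \<beta> (r+1/2) w"
  define Nhu where "Nhu = Nf \<beta> (r+1/2) u"
  define Nhv where "Nhv = Nf \<beta> (r+1/2) v"
  define Nru where "Nru = Nf \<beta> r u"
  define Nrv where "Nrv = Nf \<beta> r v"
  define h where "h = (hk r :: int^'d \<Rightarrow> real)"
  define c where "c k j = norm (u j) * kmag (k - j) * norm (v (k - j))" for k j
  define Tc where "Tc k j = norm (G k) * c k j" for k j
  have sru: "(\<lambda>k. (Nru k)\<^sup>2) summable_on UNIV" unfolding Nru_def
    by (rule Nf_sq_summable_mono[OF u0 _ _ su]) (use \<beta> in auto)
  have srv: "(\<lambda>k. (Nrv k)\<^sup>2) summable_on UNIV" unfolding Nrv_def
    by (rule Nf_sq_summable_mono[OF v0 _ _ sv]) (use \<beta> in auto)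
  have sh: "(\<lambda>k. (h k)\<^sup>2) summable_on UNIV" unfolding h_def by (rule hk_sq_summable[OF r])
  note nn = Nf_nonneg hk_nonneg
  define P1 where "P1 = (\<lambda>(k,j). W k * (h j * Nru j * Nhv (k - j)))"
  define P2 where "P2 = (\<lambda>(k,j). W k * (h j * Nrv j * Nhu (k - j)))"
  have P1s: "P1 summable_on UNIV" and P1b: "infsum P1 UNIV \<le> L2 W * (L2 h * L2 Nru * L2 Nhv)"
    using tri_summable[OF sru sv[folded Nhv_def] sw[folded W_def] sh] unfolding P1_def
    by (auto simp: W_def Nhv_def Nru_def h_def nn)
  have P2s: "P2 summable_on UNIV" and P2b: "infsum P2 UNIV \<le> L2 W * (L2 h * L2 Nrv * L2 Nhu)"
    using tri_summable[OF srv su[folded Nhu_def] sw[folded W_def] sh] unfolding P2_def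
    by (auto simp: W_def Nhu_def Nrv_def h_def nn)
  define \<phi> where "\<phi> = (\<lambda>(k::int^'d, j::int^'d). (k, k - j))"
  have bij: "bij_betw \<phi> UNIV UNIV"
    by (rule bij_betwI[of \<phi> UNIV UNIV \<phi>]) (auto simp: \<phi>_def)
  have P2s': "(\<lambda>p. P2 (\<phi> p)) summable_on UNIV"
    using summable_on_reindex_bij_betw[OF bij, of P2] P2s by simp
  have P2i: "infsum (\<lambda>p. P2 (\<phi> p)) UNIV = infsum P2 UNIV"
    by (rule infsum_reindex_bij_betw[OF bij])
  have Tle: "(\<lambda>(k,j). Tc k j) p \<le> 2 powr r * (P1 p + P2 (\<phi> p))" for p
  proof -
    obtain k j where p: "p = (k, j)" by fastforce
    show ?thesis
      using pointwise_T[of u v r \<beta> w k j] u0 v0 r12 \<beta>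
      by (simp add: p Tc_def c_def G_def P1_def P2_def \<phi>_def W_def Nhu_def Nhv_def Nru_def Nrv_def h_def)
  qed
  have Tnn: "0 \<le> (\<lambda>(k,j). Tc k j) p" for p by (auto simp: Tc_def c_def case_prod_beta kmag_nonneg)
  have Bs: "(\<lambda>p. 2 powr r * (P1 p + P2 (\<phi> p))) summable_on UNIV"
    by (intro summable_on_cmult_right summable_on_add P1s P2s')
  have Ts: "(\<lambda>(k,j). Tc k j) summable_on UNIV"
    by (rule summable_on_comparison_test[OF Bs Tle Tnn])
  have Tb: "infsum (\<lambda>(k,j). Tc k j) UNIV \<le> 2 powr r * (infsum P1 UNIV + infsum P2 UNIV)"
  proof -
    have "infsum (\<lambda>(k,j). Tc k j) UNIV \<le> infsum (\<lambda>p. 2 powr r * (P1 p + P2 (\<phi> p))) UNIV"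
      by (rule infsum_mono[OF Ts Bs Tle])
    also have "\<dots> = 2 powr r * (infsum P1 UNIV + infsum P2 UNIV)"
      by (simp add: infsum_cmult_right[OF summable_on_add[OF P1s P2s']] infsum_add[OF P1s P2s'] P2i)
    finally show ?thesis .
  qed
  have TsS: "(\<lambda>(k,j). Tc k j) summable_on Sigma UNIV (\<lambda>_. UNIV)" using Ts by simp
  have Tsec: "Tc k summable_on UNIV" for k
    using summable_on_SigmaD1[OF TsS, of k] by simp
  have Touter: "(\<lambda>k. infsum (Tc k) UNIV) summable_on UNIV"
    using summable_on_SigmaD[of "\<lambda>(k,j). Tc k j" UNIV "\<lambda>_. UNIV"] TsS Tsec by simp
  have Teq: "infsum (\<lambda>k. infsum (Tc k) UNIV) UNIV = infsum (\<lambda>(k,j). Tc k j) UNIV"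
    using infsum_Sigma_banach[of "\<lambda>(k,j). Tc k j" UNIV "\<lambda>_. UNIV"] TsS by simp
  define t where "t k = (\<Sum>i\<in>UNIV. convect u v k $ i * cnj (G k $ i))" for k
  have tb: "cmod (t k) \<le> infsum (Tc k) UNIV" for k
  proof -
    have "cmod (t k) \<le> norm (convect u v k) * norm (G k)" unfolding t_def by (rule cs_complex)
    also have "\<dots> \<le> infsum (c k) UNIV * norm (G k)"
      using convect_bound(2)[of u v \<beta> "r+1/2" k] u0 v0 su sv \<beta> r12
    proof (intro mult_right_mono)
      have ck: "c k = (\<lambda>j. norm (u j) * kmag (k - j) * norm (v (k - j)))" by (simp add: c_def fun_eq_iff)
      show "norm (convect u v k) \<le> infsum (c k) UNIV"
        unfolding ck using convect_bound(2)[of u v \<beta> "r+1/2" k] u0 v0 su sv \<beta> r12 by simp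
    qed simp
    also have "\<dots> = infsum (Tc k) UNIV"
    proof -
      have "Tc k = (\<lambda>j. norm (G k) * c k j)" by (simp add: Tc_def fun_eq_iff)
      hence "infsum (Tc k) UNIV = norm (G k) * infsum (c k) UNIV"
        using infsum_cmult_right'[of "norm (G k)" "c k" UNIV] by simp
      thus ?thesis by simp
    qed
    finally show ?thesis .
  qed
  have ts: "(\<lambda>k. norm (t k)) summable_on UNIV"
    by (rule summable_on_comparison_test[OF Touter tb]) simp
  have inner_eq: "inner_L2 (Bop u v) G = of_real ((2*pi)^CARD('d)) * infsum t UNIV"
  proof -
    have "(\<Sum>i\<in>UNIV. Bop u v k $ i * cnj (G k $ i)) = t k" for k
      unfolding Bop_def t_def G_def
      by (rule leray_inner[OF G_divfree[OF HC(3)]])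
    thus ?thesis by (simp add: inner_L2_def)
  qed
  have "cmod (inner_L2 (Bop u v) G) = (2*pi)^CARD('d) * cmod (infsum t UNIV)"
    unfolding inner_eq norm_mult norm_of_real by simp
  also have "\<dots> \<le> (2*pi)^CARD('d) * infsum (\<lambda>k. cmod (t k)) UNIV"
    by (intro mult_left_mono norm_infsum_bound ts) auto
  also have "\<dots> \<le> (2*pi)^CARD('d) * infsum (\<lambda>k. infsum (Tc k) UNIV) UNIV"
    by (intro mult_left_mono infsum_mono ts Touter tb) auto
  also have "\<dots> \<le> (2*pi)^CARD('d) * (2 powr r * (infsum P1 UNIV + infsum P2 UNIV))"
    using Tb Teq by (intro mult_left_mono) auto
  also have "\<dots> \<le> (2*pi)^CARD('d) * (2 powr r * (L2 W * (L2 h * L2 Nru * L2 Nhv) + L2 W * (L2 h * L2 Nrv * L2 Nhu)))"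
    using P1b P2b by (intro mult_left_mono add_mono) auto
  finally show ?thesis unfolding G_def W_def h_def Nru_def Nhv_def Nrv_def Nhu_def .
qed


lemma fin_real:
  fixes Lh A s p W a b c e :: real
  assumes "0 \<le> Lh" "Lh \<le> A" "1 \<le> s" "0 \<le> p" "0 \<le> W" "0 \<le> a" "0 \<le> b" "0 \<le> c" "0 \<le> e"
  shows "s\<^sup>2 * (p * (W * (Lh * a * b) + W * (Lh * c * e)))
     \<le> A * p * ((s * c) * (s * e) * (s * W) + (s * a) * (s * b) * (s * W))"
proof -
  have "s\<^sup>2 \<le> s^3" using assms(3) by (intro power_increasing) auto
  hence "s\<^sup>2 * Lh \<le> s^3 * A"
    using assms by (intro mult_mono) auto
  hence "(s\<^sup>2 * Lh) * (p * (W * (a * b) + W * (c * e))) \<le> (s^3 * A) * (p * (W * (a * b) + W * (c * e)))"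
    using assms by (intro mult_right_mono) auto
  thus ?thesis by (simp add: algebra_simps power2_eq_square power3_eq_cube)
qed

lemma C_W_ge:
  assumes "r > (real d + 1) / 2"
  shows "C_W d r \<ge> 1 / (pi * 2 ^ (d - 1))"
proof -
  have p: "2 * r - 1 - real d > 0" using assms by simp
  have "1 \<le> (2 * r - real d) / (2 * r - 1 - real d)" using p by simp
  hence "1 / (pi * 2 ^ (d - 1)) * 1 \<le> 1 / (pi * 2 ^ (d - 1)) * ((2 * r - real d) / (2 * r - 1 - real d))"
    by (intro mult_left_mono) auto
  thus ?thesis by (simp add: C_W_def)
qed

theorem mainTheorem4:
  assumes "CARD('d::finite) = 2 \<or> CARD('d) = 3"
  shows "\<exists>C>0. \<forall>(r::real) (\<beta>::real) (u::'d cfield) v w.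
     r > (real CARD('d) + 1) / 2 \<longrightarrow> \<beta> > 0 \<longrightarrow>
     in_HC u \<longrightarrow> in_HC v \<longrightarrow> in_HC w \<longrightarrow>
     gev_finite r \<beta> (Apow (1/4) u) \<longrightarrow> gev_finite r \<beta> (Apow (1/4) v) \<longrightarrow>
     gev_finite r \<beta> (Apow (1/4) w) \<longrightarrow>
     cmod (inner_L2 (Bop u v) (Apow r (expA (2 * \<beta>) w)))
       \<le> C * 2 powr r * C_W CARD('d) r *
         (gev_norm r \<beta> v * gev_norm r \<beta> (Apow (1/4) u) * gev_norm r \<beta> (Apow (1/4) w)
          + gev_norm r \<beta> u * gev_norm r \<beta> (Apow (1/4) v) * gev_norm r \<beta> (Apow (1/4) w))"
proof -
  define K0 where "K0 = infsum (kern :: int^'d \<Rightarrow> real) UNIV"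
  define c0 where "c0 = 1 / (pi * 2 ^ (CARD('d) - 1))"
  have c0: "c0 > 0" by (simp add: c0_def)
  have K0: "K0 \<ge> 0" unfolding K0_def by (intro infsum_nonneg) (simp add: kern_def)
  define C where "C = (sqrt K0 + 1) / c0"
  have "sqrt K0 + 1 > 0" using K0 by (smt (verit) real_sqrt_ge_zero)
  hence Cpos: "C > 0" using c0 unfolding C_def by (rule divide_pos_pos)
  show ?thesis
  proof (intro exI[of _ C] conjI Cpos allI impI)
    fix r \<beta> :: real and u v w :: "'d cfield"
    assume r: "r > (real CARD('d) + 1) / 2" and \<beta>: "\<beta> > 0"
      and HC: "in_HC u" "in_HC v" "in_HC w"
      and gu: "gev_finite r \<beta> (Apow (1/4) u)" and gv: "gev_finite r \<beta> (Apow (1/4) v)"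
      and gw: "gev_finite r \<beta> (Apow (1/4) w)"
    define s where "s = sqrt ((2*pi)^CARD('d))"
    have "1 \<le> 2*pi" using pi_gt3 by simp
    hence "1 \<le> (2*pi)^CARD('d)" by (rule one_le_power)
    hence s1: "1 \<le> s" unfolding s_def by simp
    have s2: "(2*pi)^CARD('d) = s\<^sup>2" unfolding s_def by simp
    have "C_W CARD('d) r \<ge> c0" unfolding c0_def by (rule C_W_ge[OF r])
    hence "C * C_W CARD('d) r \<ge> C * c0" using Cpos by (intro mult_left_mono) auto
    hence A: "C * C_W CARD('d) r \<ge> sqrt K0 + 1" using c0 by (simp add: C_def)
    have Lh: "L2 (hk r :: int^'d \<Rightarrow> real) \<le> C * C_W CARD('d) r"
      using L2_hk_le[OF r] A unfolding K0_def by linarith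
    have mb: "cmod (inner_L2 (Bop u v) (Apow r (expA (2 * \<beta>) w)))
      \<le> (2*pi)^CARD('d) * (2 powr r * (L2 (Nf \<beta> (r+1/2) w) * (L2 (hk r :: int^'d \<Rightarrow> real) * L2 (Nf \<beta> r u) * L2 (Nf \<beta> (r+1/2) v))
         + L2 (Nf \<beta> (r+1/2) w) * (L2 (hk r :: int^'d \<Rightarrow> real) * L2 (Nf \<beta> r v) * L2 (Nf \<beta> (r+1/2) u))))"
      by (rule main_bound[OF r \<beta> HC gu[unfolded gev_finite_iff] gv[unfolded gev_finite_iff] gw[unfolded gev_finite_iff]])
    also have "\<dots> \<le> (C * C_W CARD('d) r) * 2 powr r *
       ((s * L2 (Nf \<beta> r v)) * (s * L2 (Nf \<beta> (r+1/2) u)) * (s * L2 (Nf \<beta> (r+1/2) w))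
      + (s * L2 (Nf \<beta> r u)) * (s * L2 (Nf \<beta> (r+1/2) v)) * (s * L2 (Nf \<beta> (r+1/2) w)))"
      unfolding s2 by (rule fin_real[OF L2_nonneg Lh s1]) (auto simp: L2_nonneg)
    also have "\<dots> = C * 2 powr r * C_W CARD('d) r *
         (gev_norm r \<beta> v * gev_norm r \<beta> (Apow (1/4) u) * gev_norm r \<beta> (Apow (1/4) w)
          + gev_norm r \<beta> u * gev_norm r \<beta> (Apow (1/4) v) * gev_norm r \<beta> (Apow (1/4) w))"
    proof -
      have e1: "gev_norm r \<beta> (Apow (1/4) u) = s * L2 (Nf \<beta> (r+1/2) u)" unfolding s_def by (rule gev_norm_A14)
      have e2: "gev_norm r \<beta> (Apow (1/4) v) = s * L2 (Nf \<beta> (r+1/2) v)" unfolding s_def by (rule gev_norm_A14)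
      have e3: "gev_norm r \<beta> (Apow (1/4) w) = s * L2 (Nf \<beta> (r+1/2) w)" unfolding s_def by (rule gev_norm_A14)
      have e4: "gev_norm r \<beta> u = s * L2 (Nf \<beta> r u)" unfolding s_def by (rule gev_norm_0)
      have e5: "gev_norm r \<beta> v = s * L2 (Nf \<beta> r v)" unfolding s_def by (rule gev_norm_0)
      show ?thesis unfolding e1 e2 e3 e4 e5 by (simp only: mult_ac)
    qed
    finally show "cmod (inner_L2 (Bop u v) (Apow r (expA (2 * \<beta>) w)))
       \<le> C * 2 powr r * C_W CARD('d) r *
         (gev_norm r \<beta> v * gev_norm r \<beta> (Apow (1/4) u) * gev_norm r \<beta> (Apow (1/4) w)
          + gev_norm r \<beta> u * gev_norm r \<beta> (Apow (1/4) v) * gev_norm r \<beta> (Apow (1/4) w))" .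
  qed
qed


end
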